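(* Suppose there exists a decomposition $U_0,U_1,\ldots,U_d$ of $V$ which is split with respect to the orderings $E_0,\ldots,E_d$ and $E^*_0,\ldots,E^*_d$. Then for $0\le i\le d$: (i) $\sum_{h=0}^iU_h=\sum_{h=0}^iA^hE^*_0V$; (ii) $\sum_{h=0}^iU_h=\sum_{h=0}^iE^*_hV$; (iii) $\sum_{h=i}^dU_h=\sum_{h=0}^{d-i}A^{*h}E_dV$; (iv) $\sum_{h=i}^dU_h=\sum_{h=i}^dE_hV$; (v) $U_i=(E^*_0V+E^*_1V+\cdots+E^*_iV)\cap(E_iV+E_{i+1}V+\cdots+E_dV)$.
   Context: Let $\mathbb K$ be a field, $d\ge 0$ an integer, and $\mathcal A$ a $\mathbb K$-algebra isomorphic to $\mathrm{Mat}_{d+1}(\mathbb K)$, with identity $I$. An element of $\mathcal A$ is multiplicity-free if it has $d+1$ mutually distinct eigenvalues, all in $\mathbb K$; for such $A$ with eigenvalues $\theta_0,\ldots,\theta_d$, the primitive idempotent associated with $\theta_i$ is $E_i=\prod_{j\ne i}(A-\theta_jI)/(\theta_i-\theta_j)$. Standing setup: $A,A^*$ are multiplicity-free elements of $\mathcal A$ ($A^*$ is just a name, not an adjoint); $E_0,\ldots,E_d$ is an ordering of the primitive idempotents of $A$ and $\theta_i$ is the eigenvalue of $A$ for $E_i$; $E^*_0,\ldots,E^*_d$ is an ordering of the primitive idempotents of $A^*$ and $\theta^*_i$ is the eigenvalue of $A^*$ for $E^*_i$; $V$ is an irreducible left $\mathcal A$-module. A decomposition of $V$ is a sequence $U_0,\ldots,U_d$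 of 1-dimensional subspaces with $V=U_0+\cdots+U_d$ (direct sum). Such a decomposition is split (with respect to the orderings $E_0,\ldots,E_d$ and $E^*_0,\ldots,E^*_d$) if $(A-\theta_iI)U_i=U_{i+1}$ for $0\le i\le d-1$, $(A-\theta_dI)U_d=0$, $(A^*-\theta^*_iI)U_i=U_{i-1}$ for $1\le i\le d$, and $(A^*-\theta^*_0I)U_0=0$. *)

theory Defs
  imports "HOL-Analysis.Analysis"
begin

text \<open>The algebra Mat_{d+1}(K) acting on its irreducible module V is modelled concretely:
  V = K^n with CARD('n) = d+1, elements of the algebra are n x n matrices acting by (*v).\<close>

definition is_eigval :: "'a::field^'n^'n \<Rightarrow> 'a \<Rightarrow> bool" where
  "is_eigval M c \<longleftrightarrow> (\<exists>v. v \<noteq> 0 \<and> M *v v = c *s v)"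

text \<open>theta_0..theta_d is an ordering of the eigenvalues of a multiplicity-free M
  (d+1 mutually distinct eigenvalues, all in K).\<close>
definition mf_ordering :: "'a::field^'n^'n \<Rightarrow> (nat \<Rightarrow> 'a) \<Rightarrow> nat \<Rightarrow> bool" where
  "mf_ordering M th d \<longleftrightarrow> CARD('n) = d + 1 \<and> inj_on th {..d}
     \<and> {c. is_eigval M c} = th ` {..d}"

definition prim_idem :: "'a::field^'n^'n \<Rightarrow> (nat \<Rightarrow> 'a) \<Rightarrow> nat \<Rightarrow> nat \<Rightarrow> 'a^'n^'n" where
  "prim_idem M th d i = foldr (\<lambda>j P. (if j = i then mat 1
        else mat (inverse (th i - th j)) ** (M - mat (th j))) ** P) [0..<Suc d] (mat 1)"

definition img :: "'a::field^'n^'n \<Rightarrow> ('a^'n) set" where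
  "img M = range (\<lambda>v. M *v v)"

definition is_decomposition :: "nat \<Rightarrow> (nat \<Rightarrow> ('a::field^'n) set) \<Rightarrow> bool" where
  "is_decomposition d U \<longleftrightarrow>
     (\<forall>h\<le>d. vec.subspace (U h) \<and> vec.dim (U h) = 1)
     \<and> vec.span (\<Union>h\<le>d. U h) = UNIV
     \<and> (\<forall>u. (\<forall>h\<le>d. u h \<in> U h) \<and> (\<Sum>h\<le>d. u h) = 0 \<longrightarrow> (\<forall>h\<le>d. u h = 0))"

definition is_split :: "'a::field^'n^'n \<Rightarrow> 'a^'n^'n \<Rightarrow> (nat \<Rightarrow> 'a) \<Rightarrow> (nat \<Rightarrow> 'a)
    \<Rightarrow> nat \<Rightarrow> (nat \<Rightarrow> ('a^'n) set) \<Rightarrow> bool" where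
  "is_split A As th ths d U \<longleftrightarrow> is_decomposition d U
     \<and> (\<forall>i<d. (\<lambda>v. (A - mat (th i)) *v v) ` U i = U (Suc i))
     \<and> (\<lambda>v. (A - mat (th d)) *v v) ` U d = {0}
     \<and> (\<forall>i. 1 \<le> i \<and> i \<le> d \<longrightarrow> (\<lambda>v. (As - mat (ths i)) *v v) ` U i = U (i - 1))
     \<and> (\<lambda>v. (As - mat (ths 0)) *v v) ` U 0 = {0}"

definition mpow_app :: "'a::field^'n^'n \<Rightarrow> nat \<Rightarrow> 'a^'n \<Rightarrow> 'a^'n" where
  "mpow_app M h = ((\<lambda>v. M *v v) ^^ h)"

end

theory Submission
  imports Defs
begin

lemma mat_mv: "mat t *v (x::'a::field^'n) = t *s x"
proof -
  have "\<And>i. (\<Sum>j\<in>UNIV. (if i = j then t else 0) * x$j) = t * x$i"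
    by (simp add: if_distrib[where f="\<lambda>a. a * c" for c] cong: if_cong)
  then show ?thesis by (simp add: vec_eq_iff matrix_vector_mult_def mat_def)
qed

lemma mv_span:
  fixes M :: "'a::field^'n^'n"
  assumes "\<And>y. y \<in> S \<Longrightarrow> M *v y \<in> vec.span T" "x \<in> vec.span S"
  shows "M *v x \<in> vec.span T"
proof -
  have "vec.subspace {x. M *v x \<in> vec.span T}"
    unfolding vec.subspace_def
    by (auto simp: matrix_vector_right_distrib vector_scalar_commute vec.span_zero vec.span_add vec.span_scale)
  then show ?thesis using vec.span_subspace_induct[OF assms(2)] assms(1) by blast
qed

lemma mv_span_single: "(\<lambda>v. (M::'a::field^'n^'n) *v v) ` vec.span {x} = vec.span {M *v x}"
  unfolding vec.span_singleton image_image by (simp add: vector_scalar_commute)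

lemma mv_scale: "(M::'a::field^'n^'n) *v (a *s x + b *s y) = a *s (M *v x) + b *s (M *v y)"
  by (simp add: matrix_vector_right_distrib vector_scalar_commute)

lemma comm_lin:
  fixes M :: "'a::field^'n^'n"
  shows "a *s (M *v (a' *s (M *v x) + b' *s x)) + b *s (a' *s (M *v x) + b' *s x)
       = a' *s (M *v (a *s (M *v x) + b *s x)) + b' *s (a *s (M *v x) + b *s x)"
  by (simp add: mv_scale vector_scalar_commute vec_eq_iff algebra_simps)

lemma span_Union_single:
  "(\<forall>h\<in>I. U h = vec.span {u h}) \<Longrightarrow> vec.span (\<Union>h\<in>I. U h) = vec.span (u ` I)"
proof (rule antisym)
  assume a: "\<forall>h\<in>I. U h = vec.span {u h}"
  show "vec.span (\<Union>h\<in>I. U h) \<subseteq> vec.span (u ` I)"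
  proof (rule vec.span_minimal)
    show "(\<Union>h\<in>I. U h) \<subseteq> vec.span (u ` I)"
      using a vec.span_mono[of "{u h}" "u ` I" for h] by auto
  qed simp
  show "vec.span (u ` I) \<subseteq> vec.span (\<Union>h\<in>I. U h)"
    by (rule vec.span_mono) (use a vec.span_superset in blast)
qed

lemma span_repr:
  assumes "finite I" "x \<in> vec.span (u ` I)"
  shows "\<exists>c. x = (\<Sum>h\<in>I. c h *s (u h :: 'a::field^'n))"
  using assms
proof (induction I arbitrary: x rule: finite_induct)
  case empty then show ?case by simp
next
  case (insert i I)
  from insert.prems obtain k where "x - k *s u i \<in> vec.span (u ` I)"
    by (auto simp: vec.span_insert)
  with insert.IH obtain c where c: "x - k *s u i = (\<Sum>h\<in>I. c h *s u h)" by blast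
  have e: "(\<Sum>h\<in>I. (c(i:=k)) h *s u h) = (\<Sum>h\<in>I. c h *s u h)"
    using insert.hyps by (intro sum.cong) auto
  have "x = (\<Sum>h\<in>insert i I. (c(i:=k)) h *s u h)"
    using insert.hyps c e by (simp add: algebra_simps)
  then show ?case by blast
qed

lemma foldr_pres: "(\<forall>j\<in>set xs. \<forall>x\<in>S. f j x \<in> S) \<Longrightarrow> v \<in> S \<Longrightarrow> foldr f xs v \<in> S"
  by (induction xs) auto

lemma foldr_mat_act:
  "foldr (\<lambda>j P. F j ** P) xs (mat 1) *v (v::'a::field^'n) = foldr (\<lambda>j w. F j *v w) xs v"
  by (induction xs) (simp_all add: matrix_vector_mul_assoc[symmetric])

lemma prim_idem_act:
  "prim_idem M th d i *v v = foldr (\<lambda>j w. (if j = i then mat 1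
        else mat (inverse (th i - th j)) ** (M - mat (th j))) *v w) [0..<Suc d] v"
  unfolding prim_idem_def by (rule foldr_mat_act)

lemma matc_act: "(mat c ** N) *v (w::'a::field^'n) = c *s (N *v w)"
  by (simp add: matrix_vector_mul_assoc[symmetric] mat_mv)

lemma fac_lin: "(if j = i then mat 1 else mat c ** (M - mat t)) *v (w::'a::field^'n)
   = (if j = i then 0 else c) *s (M *v w) + (if j = i then 1 else - (c*t)) *s w"
  by (simp add: matc_act matrix_vector_mult_diff_rdistrib mat_mv vec_eq_iff algebra_simps)

lemma foldr_rev_comm:
  assumes "\<And>j k x. f j (f k x) = f k (f j x)"
  shows "foldr f xs v = foldr f (rev xs) v"
proof -
  have "foldr f xs = fold f xs" by (rule foldr_fold) (use assms in auto)
  then show ?thesis by (simp add: foldr_conv_fold)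
qed

lemma prim_idem_rev:
  "prim_idem M th d i *v v = foldr (\<lambda>j w. (if j = i then mat 1
        else mat (inverse (th i - th j)) ** (M - mat (th j))) *v w) (rev [0..<Suc d]) v"
  unfolding prim_idem_act
  by (rule foldr_rev_comm) (simp only: fac_lin comm_lin)

context
  fixes M :: "'a::field^'n^'n" and th :: "nat \<Rightarrow> 'a" and u :: "nat \<Rightarrow> 'a^'n" and d :: nat
  assumes Mu: "\<And>i. i < d \<Longrightarrow> M *v u i = th i *s u i + u (Suc i)"
    and Mud: "M *v u d = th d *s u d"
begin

lemma L_Mt_u: "h \<le> d \<Longrightarrow> (M - mat t) *v u h = (th h - t) *s u h + (if h < d then u (Suc h) else 0)"
  using Mu[of h] Mud
  by (cases "h < d") (auto simp: matrix_vector_mult_diff_rdistrib mat_mv vec_eq_iff algebra_simps)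

lemma L_inv: "x \<in> vec.span (u ` {k..d}) \<Longrightarrow> (M - mat t) *v x \<in> vec.span (u ` {k..d})"
proof (erule mv_span[rotated])
  fix y assume "y \<in> u ` {k..d}"
  then obtain h where h: "h \<in> {k..d}" "y = u h" by auto
  have a: "u h \<in> vec.span (u ` {k..d})" using h by (intro vec.span_base) auto
  have b: "(if h < d then u (Suc h) else 0) \<in> vec.span (u ` {k..d})"
    using h by (auto intro: vec.span_base vec.span_zero)
  have hd: "h \<le> d" using h by auto
  show "(M - mat t) *v y \<in> vec.span (u ` {k..d})"
    unfolding h(2) L_Mt_u[OF hd] by (intro vec.span_add vec.span_scale a b)
qed

lemma L_step: "x \<in> vec.span (u ` {k..d}) \<Longrightarrow> (M - mat (th k)) *v x \<in> vec.span (u ` {Suc k..d})"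
proof (erule mv_span[rotated])
  fix y assume "y \<in> u ` {k..d}"
  then obtain h where h: "h \<in> {k..d}" "y = u h" by auto
  have b: "(if h < d then u (Suc h) else 0) \<in> vec.span (u ` {Suc k..d})"
    using h by (auto intro: vec.span_base vec.span_zero)
  show "(M - mat (th k)) *v y \<in> vec.span (u ` {Suc k..d})"
  proof (cases "h = k")
    case True
    have hd: "h \<le> d" using h by auto
    show ?thesis unfolding h(2) L_Mt_u[OF hd] using True b by simp
  next
    case False
    have a: "u h \<in> vec.span (u ` {Suc k..d})" using h False by (intro vec.span_base) auto
    have hd: "h \<le> d" using h by auto
    show ?thesis unfolding h(2) L_Mt_u[OF hd] by (intro vec.span_add vec.span_scale a b)
  qed
qed

lemma L_near:
  assumes "k \<le> d" "t \<noteq> th k" "x - u k \<in> vec.span (u ` {Suc k..d})"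
  shows "(mat (inverse (th k - t)) ** (M - mat t)) *v x - u k \<in> vec.span (u ` {Suc k..d})"
proof -
  let ?S = "vec.span (u ` {Suc k..d})"
  let ?c = "inverse (th k - t)"
  let ?r = "(if k < d then u (Suc k) else 0)"
  have c1: "?c * (th k - t) = 1" using assms(2) by simp
  have 1: "(M - mat t) *v x = (M - mat t) *v u k + (M - mat t) *v (x - u k)"
    by (simp flip: matrix_vector_right_distrib)
  have 2: "?c *s ((M - mat t) *v u k) = u k + ?c *s ?r"
    unfolding L_Mt_u[OF assms(1)] vec.scale_right_distrib vec.scale_scale c1 by simp
  have e: "(mat ?c ** (M - mat t)) *v x - u k = ?c *s ?r + ?c *s ((M - mat t) *v (x - u k))"
    unfolding matc_act 1 vec.scale_right_distrib 2 by simp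
  have "(M - mat t) *v (x - u k) \<in> ?S" by (rule L_inv[OF assms(3)])
  moreover have "(if k < d then u (Suc k) else 0) \<in> ?S"
    by (auto intro: vec.span_base vec.span_zero)
  ultimately show ?thesis unfolding e by (auto intro!: vec.span_add vec.span_scale)
qed

end

lemma LE_img:
  fixes M :: "'a::field^'n^'n"
  assumes Mu: "\<And>i. i < d \<Longrightarrow> M *v u i = th i *s u i + u (Suc i)"
    and Mud: "M *v u d = th d *s u d"
    and sp: "vec.span (u ` {..d}) = UNIV" and hd: "h \<le> d"
  shows "prim_idem M th d h *v v \<in> vec.span (u ` {h..d})"
proof -
  define f where "f = (\<lambda>j w. (if j = h then mat 1
        else mat (inverse (th h - th j)) ** (M - mat (th j))) *v (w::'a^'n))"
  have "k \<le> Suc d \<Longrightarrow> foldr f (rev [0..<k]) v \<in> vec.span (u ` {min k h..d})" for k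
  proof (induction k)
    case 0
    then show ?case using sp by (simp add: atLeast0AtMost)
  next
    case (Suc k)
    then have w: "foldr f (rev [0..<k]) v \<in> vec.span (u ` {min k h..d})" by simp
    have r: "foldr f (rev [0..<Suc k]) v = f k (foldr f (rev [0..<k]) v)" by simp
    show ?case
    proof (cases "k < h")
      case True
      have w': "foldr f (rev [0..<k]) v \<in> vec.span (u ` {k..d})" using w True by (simp add: min_def)
      have fk: "f k y = inverse (th h - th k) *s ((M - mat (th k)) *v y)" for y
        using True by (simp add: f_def matc_act)
      show ?thesis unfolding r fk using True
        by (simp add: min_def vec.span_scale L_step[OF Mu Mud w'])
    next
      case False
      show ?thesis
      proof (cases "k = h")
        case True
        have fk: "f k y = y" for y using True by (simp add: f_def)
        show ?thesis unfolding r fk using w True by (simp add: min_def)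
      next
        case False2: False
        have w': "foldr f (rev [0..<k]) v \<in> vec.span (u ` {h..d})" using w False False2 by (simp add: min_def)
        have fk: "f k y = inverse (th h - th k) *s ((M - mat (th k)) *v y)" for y
          using False2 by (simp add: f_def matc_act)
        show ?thesis unfolding r fk using False
          by (simp add: min_def vec.span_scale L_inv[OF Mu Mud w'])
      qed
    qed
  qed
  from this[of "Suc d"] hd show ?thesis
    unfolding prim_idem_rev f_def by (simp add: min_def)
qed

lemma LE_near:
  fixes M :: "'a::field^'n^'n"
  assumes Mu: "\<And>i. i < d \<Longrightarrow> M *v u i = th i *s u i + u (Suc i)"
    and Mud: "M *v u d = th d *s u d"
    and inj: "inj_on th {..d}" and hd: "h \<le> d"
  shows "prim_idem M th d h *v u h - u h \<in> vec.span (u ` {Suc h..d})"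
proof -
  let ?S = "{x. x - u h \<in> vec.span (u ` {Suc h..d})}"
  have "foldr (\<lambda>j w. (if j = h then mat 1
        else mat (inverse (th h - th j)) ** (M - mat (th j))) *v w) [0..<Suc d] (u h) \<in> ?S"
  proof (rule foldr_pres)
    show "u h \<in> ?S" by (simp add: vec.span_zero)
    show "\<forall>j\<in>set [0..<Suc d]. \<forall>x\<in>?S. (if j = h then mat 1
        else mat (inverse (th h - th j)) ** (M - mat (th j))) *v x \<in> ?S"
    proof (intro ballI)
      fix j x assume j: "j \<in> set [0..<Suc d]" and x: "x \<in> ?S"
      show "(if j = h then mat 1
        else mat (inverse (th h - th j)) ** (M - mat (th j))) *v x \<in> ?S"
      proof (cases "j = h")
        case True then show ?thesis using x by simp
      next
        case False
        then have "th j \<noteq> th h" using inj j hd by (auto dest: inj_onD)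
        then show ?thesis using False x L_near[OF Mu Mud hd, of "th j" x] by simp
      qed
    qed
  qed
  then show ?thesis unfolding prim_idem_act by simp
qed

lemma Mt_split: "(M - mat t) *v (y::'a::field^'n) = (s - t) *s y + (M *v y - s *s y)"
  by (simp add: matrix_vector_mult_diff_rdistrib mat_mv vec_eq_iff algebra_simps)

context
  fixes M :: "'a::field^'n^'n" and th :: "nat \<Rightarrow> 'a" and u :: "nat \<Rightarrow> 'a^'n" and d :: nat
  assumes Mu0: "M *v u 0 = th 0 *s u 0"
    and Mu: "\<And>i. 1 \<le> i \<Longrightarrow> i \<le> d \<Longrightarrow> M *v u i - th i *s u i \<in> vec.span {u (i - 1)}"
begin

lemma R1: "h \<le> d \<Longrightarrow> M *v u h - th h *s u h \<in> vec.span (u ` {..<h})"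
proof (cases "h = 0")
  case True then show ?thesis using Mu0 by (simp add: vec.span_zero)
next
  case False
  assume "h \<le> d"
  then have "M *v u h - th h *s u h \<in> vec.span {u (h - 1)}" using False Mu by simp
  moreover have "vec.span {u (h - 1)} \<subseteq> vec.span (u ` {..<h})"
    using False by (intro vec.span_mono) auto
  ultimately show ?thesis by blast
qed

lemma R2: "Suc k \<le> h \<Longrightarrow> h \<le> d \<Longrightarrow> M *v u h - th h *s u h \<in> vec.span (u ` {k..d})"
proof -
  assume a: "Suc k \<le> h" "h \<le> d"
  then have "M *v u h - th h *s u h \<in> vec.span {u (h - 1)}" using Mu by simp
  moreover have "vec.span {u (h - 1)} \<subseteq> vec.span (u ` {k..d})"
    using a by (intro vec.span_mono) (auto intro!: image_eqI[of _ u "h - 1"])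
  ultimately show ?thesis by blast
qed

lemma U_inv: "k \<le> Suc d \<Longrightarrow> x \<in> vec.span (u ` {..<k}) \<Longrightarrow> (M - mat t) *v x \<in> vec.span (u ` {..<k})"
proof (erule mv_span[rotated])
  fix y assume k: "k \<le> Suc d" and "y \<in> u ` {..<k}"
  then obtain h where h: "h < k" "y = u h" by auto
  have a: "u h \<in> vec.span (u ` {..<k})" using h by (intro vec.span_base) auto
  have "M *v u h - th h *s u h \<in> vec.span (u ` {..<h})" using h k by (intro R1) auto
  moreover have "vec.span (u ` {..<h}) \<subseteq> vec.span (u ` {..<k})"
    using h by (intro vec.span_mono) auto
  ultimately have b: "M *v u h - th h *s u h \<in> vec.span (u ` {..<k})" by blast
  show "(M - mat t) *v y \<in> vec.span (u ` {..<k})"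
    unfolding h(2) Mt_split[of M t _ "th h"] by (intro vec.span_add vec.span_scale a b)
qed

lemma U_step: "k \<le> d \<Longrightarrow> x \<in> vec.span (u ` {..<Suc k}) \<Longrightarrow> (M - mat (th k)) *v x \<in> vec.span (u ` {..<k})"
proof (erule mv_span[rotated])
  fix y assume k: "k \<le> d" and "y \<in> u ` {..<Suc k}"
  then obtain h where h: "h < Suc k" "y = u h" by auto
  have "M *v u h - th h *s u h \<in> vec.span (u ` {..<h})" using h k by (intro R1) auto
  moreover have "vec.span (u ` {..<h}) \<subseteq> vec.span (u ` {..<k})"
    using h by (intro vec.span_mono) auto
  ultimately have b: "M *v u h - th h *s u h \<in> vec.span (u ` {..<k})" by blast
  show "(M - mat (th k)) *v y \<in> vec.span (u ` {..<k})"
  proof (cases "h = k")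
    case True
    then show ?thesis unfolding h(2) Mt_split[of M "th k" _ "th h"] using b by simp
  next
    case False
    then have a: "u h \<in> vec.span (u ` {..<k})" using h by (intro vec.span_base) auto
    show ?thesis
      unfolding h(2) Mt_split[of M "th k" _ "th h"] by (intro vec.span_add vec.span_scale a b)
  qed
qed

lemma U_near:
  assumes "k \<le> d" "t \<noteq> th k" "x - u k \<in> vec.span (u ` {..<k})"
  shows "(mat (inverse (th k - t)) ** (M - mat t)) *v x - u k \<in> vec.span (u ` {..<k})"
proof -
  let ?S = "vec.span (u ` {..<k})"
  let ?c = "inverse (th k - t)"
  let ?r = "M *v u k - th k *s u k"
  have c1: "?c * (th k - t) = 1" using assms(2) by simp
  have 1: "(M - mat t) *v x = (M - mat t) *v u k + (M - mat t) *v (x - u k)"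
    by (simp flip: matrix_vector_right_distrib)
  have 2: "?c *s ((M - mat t) *v u k) = u k + ?c *s ?r"
    unfolding Mt_split[of M t _ "th k"] vec.scale_right_distrib vec.scale_scale c1 by simp
  have e: "(mat ?c ** (M - mat t)) *v x - u k = ?c *s ?r + ?c *s ((M - mat t) *v (x - u k))"
    unfolding matc_act 1 vec.scale_right_distrib 2 by simp
  have A1: "(M - mat t) *v (x - u k) \<in> ?S" using assms by (intro U_inv) auto
  have A2: "?r \<in> ?S" using assms R1 by auto
  show ?thesis unfolding e by (intro vec.span_add vec.span_scale A1 A2)
qed

lemma U_down: "x \<in> vec.span (u ` {Suc k..d}) \<Longrightarrow> M *v x \<in> vec.span (u ` {k..d})"
proof (erule mv_span[rotated])
  fix y assume "y \<in> u ` {Suc k..d}"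
  then obtain h where h: "h \<in> {Suc k..d}" "y = u h" by auto
  have a: "u h \<in> vec.span (u ` {k..d})" using h by (intro vec.span_base) auto
  have b: "M *v u h - th h *s u h \<in> vec.span (u ` {k..d})" using h by (intro R2) auto
  have "M *v u h = th h *s u h + (M *v u h - th h *s u h)" by simp
  then show "M *v y \<in> vec.span (u ` {k..d})"
    using h(2) by (metis a b vec.span_add vec.span_scale)
qed

end

lemma UE_img:
  fixes M :: "'a::field^'n^'n"
  assumes Mu0: "M *v u 0 = th 0 *s u 0"
    and Mu: "\<And>i. 1 \<le> i \<Longrightarrow> i \<le> d \<Longrightarrow> M *v u i - th i *s u i \<in> vec.span {u (i - 1)}"
    and sp: "vec.span (u ` {..d}) = UNIV" and hd: "h \<le> d"
  shows "prim_idem M th d h *v v \<in> vec.span (u ` {..<Suc h})"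
proof -
  define f where "f = (\<lambda>j w. (if j = h then mat 1
        else mat (inverse (th h - th j)) ** (M - mat (th j))) *v (w::'a^'n))"
  have "n \<le> Suc d \<Longrightarrow> foldr f [n..<Suc d] v \<in> vec.span (u ` {..<max n (Suc h)})" for n
  proof (induction n rule: inc_induct)
    case base
    have "max (Suc d) (Suc h) = Suc d" using hd by simp
    then show ?case using sp by (simp add: lessThan_Suc_atMost)
  next
    case (step n)
    have eq: "[n..<Suc d] = n # [Suc n..<Suc d]"
      by (rule upt_conv_Cons) (use step.hyps in simp)
    have r: "foldr f [n..<Suc d] v = f n (foldr f [Suc n..<Suc d] v)"
      unfolding eq by simp
    show ?case
    proof (cases "h < n")
      case True
      have w': "foldr f [Suc n..<Suc d] v \<in> vec.span (u ` {..<Suc n})"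
        using step.IH True by (simp add: max_def)
      have fk: "f n y = inverse (th h - th n) *s ((M - mat (th n)) *v y)" for y
        using True by (simp add: f_def matc_act)
      have nd: "n \<le> d" using step.hyps by simp
      have m: "max n (Suc h) = n" using True by simp
      show ?thesis unfolding r fk m by (intro vec.span_scale U_step[OF Mu0 Mu nd w'])
    next
      case False
      show ?thesis
      proof (cases "n = h")
        case True
        have fk: "f n y = y" for y using True by (simp add: f_def)
        have m: "max n (Suc h) = max (Suc n) (Suc h)" using True by simp
        show ?thesis unfolding r fk m by (rule step.IH)
      next
        case False2: False
        have w': "foldr f [Suc n..<Suc d] v \<in> vec.span (u ` {..<Suc h})"
          using step.IH False False2 by (simp add: max_def)
        have fk: "f n y = inverse (th h - th n) *s ((M - mat (th n)) *v y)" for y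
          using False2 by (simp add: f_def matc_act)
        have hd': "Suc h \<le> Suc d" using hd by simp
        have m: "max n (Suc h) = Suc h" using False False2 by simp
        show ?thesis unfolding r fk m by (intro vec.span_scale U_inv[OF Mu0 Mu hd' w'])
      qed
    qed
  qed
  from this[of 0] show ?thesis
    unfolding prim_idem_act f_def by simp
qed

lemma UE_near:
  fixes M :: "'a::field^'n^'n"
  assumes Mu0: "M *v u 0 = th 0 *s u 0"
    and Mu: "\<And>i. 1 \<le> i \<Longrightarrow> i \<le> d \<Longrightarrow> M *v u i - th i *s u i \<in> vec.span {u (i - 1)}"
    and inj: "inj_on th {..d}" and hd: "h \<le> d"
  shows "prim_idem M th d h *v u h - u h \<in> vec.span (u ` {..<h})"
proof -
  let ?S = "{x. x - u h \<in> vec.span (u ` {..<h})}"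
  have "foldr (\<lambda>j w. (if j = h then mat 1
        else mat (inverse (th h - th j)) ** (M - mat (th j))) *v w) [0..<Suc d] (u h) \<in> ?S"
  proof (rule foldr_pres)
    show "u h \<in> ?S" by (simp add: vec.span_zero)
    show "\<forall>j\<in>set [0..<Suc d]. \<forall>x\<in>?S. (if j = h then mat 1
        else mat (inverse (th h - th j)) ** (M - mat (th j))) *v x \<in> ?S"
    proof (intro ballI)
      fix j x assume j: "j \<in> set [0..<Suc d]" and x: "x \<in> ?S"
      show "(if j = h then mat 1
        else mat (inverse (th h - th j)) ** (M - mat (th j))) *v x \<in> ?S"
      proof (cases "j = h")
        case True then show ?thesis using x by simp
      next
        case False
        then have "th j \<noteq> th h" using inj j hd by (auto dest: inj_onD)
        then show ?thesis using False x U_near[OF Mu0 Mu hd, of "th j" x] by simp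
      qed
    qed
  qed
  then show ?thesis unfolding prim_idem_act by simp
qed

lemma mpow_scale: "mpow_app (M::'a::field^'n^'n) h (k *s x) = k *s mpow_app M h x"
  by (induction h) (simp_all add: mpow_app_def vector_scalar_commute)

lemma mpow_Suc: "mpow_app M (Suc h) x = M *v mpow_app M h x"
  by (simp add: mpow_app_def)

lemma mpow_span_single: "mpow_app (M::'a::field^'n^'n) h ` vec.span {x} = vec.span {mpow_app M h x}"
  unfolding vec.span_singleton image_image mpow_scale by simp

theorem lemma2p4:
  fixes A As :: "'a::field^'n^'n" and th ths :: "nat \<Rightarrow> 'a" and d :: nat
    and U :: "nat \<Rightarrow> ('a^'n) set"
  assumes "mf_ordering A th d" and "mf_ordering As ths d"
    and "is_split A As th ths d U"
  defines "E \<equiv> prim_idem A th d" and "Es \<equiv> prim_idem As ths d"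
  shows "\<forall>i\<le>d.
      vec.span (\<Union>h\<le>i. U h) = vec.span (\<Union>h\<le>i. mpow_app A h ` img (Es 0))
    \<and> vec.span (\<Union>h\<le>i. U h) = vec.span (\<Union>h\<le>i. img (Es h))
    \<and> vec.span (\<Union>h\<in>{i..d}. U h) = vec.span (\<Union>h\<le>d - i. mpow_app As h ` img (E d))
    \<and> vec.span (\<Union>h\<in>{i..d}. U h) = vec.span (\<Union>h\<in>{i..d}. img (E h))
    \<and> U i = vec.span (\<Union>h\<le>i. img (Es h)) \<inter> vec.span (\<Union>h\<in>{i..d}. img (E h))"
proof -
  from assms(3) have dec: "is_decomposition d U"
    and sA: "\<forall>i<d. (\<lambda>v. (A - mat (th i)) *v v) ` U i = U (Suc i)"
    and sAd: "(\<lambda>v. (A - mat (th d)) *v v) ` U d = {0}"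
    and sAs: "\<forall>i. 1 \<le> i \<and> i \<le> d \<longrightarrow> (\<lambda>v. (As - mat (ths i)) *v v) ` U i = U (i - 1)"
    and sAs0: "(\<lambda>v. (As - mat (ths 0)) *v v) ` U 0 = {0}"
    unfolding is_split_def by auto
  from dec have sub: "\<forall>h\<le>d. vec.subspace (U h) \<and> vec.dim (U h) = 1"
    and spU: "vec.span (\<Union>h\<le>d. U h) = UNIV"
    and indep: "\<forall>w. (\<forall>h\<le>d. w h \<in> U h) \<and> (\<Sum>h\<le>d. w h) = 0 \<longrightarrow> (\<forall>h\<le>d. w h = 0)"
    unfolding is_decomposition_def by auto
  have injA: "inj_on th {..d}" and injAs: "inj_on ths {..d}"
    using assms(1,2) by (auto simp: mf_ordering_def)
  obtain B where B: "B \<subseteq> U 0" "vec.independent B" "U 0 \<subseteq> vec.span B" "card B = vec.dim (U 0)"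
    by (rule vec.basis_exists)
  then obtain u0 where Bu0: "B = {u0}" using sub by (auto simp: card_1_singleton_iff)
  have U0: "U 0 = vec.span {u0}"
    using vec.span_subspace[OF B(1) B(3)] sub Bu0 by auto
  define u where "u = rec_nat u0 (\<lambda>i x. (A - mat (th i)) *v x)"
  have u0': "u 0 = u0" and uS: "\<And>i. u (Suc i) = (A - mat (th i)) *v u i"
    by (simp_all add: u_def)
  have Uu: "i \<le> d \<Longrightarrow> U i = vec.span {u i}" for i
  proof (induction i)
    case 0 then show ?case using U0 u0' by simp
  next
    case (Suc i)
    then have "i < d" by simp
    then have "U (Suc i) = (\<lambda>v. (A - mat (th i)) *v v) ` U i" using sA by simp
    also have "\<dots> = vec.span {u (Suc i)}" using Suc by (simp add: mv_span_single uS)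
    finally show ?case .
  qed
  have unz: "i \<le> d \<Longrightarrow> u i \<noteq> 0" for i
  proof
    assume "i \<le> d" "u i = 0"
    then have "U i = vec.span {}" using Uu[of i] by simp
    then have "vec.dim (U i) = 0" by simp
    then show False using sub \<open>i \<le> d\<close> by simp
  qed
  have mvd: "\<And>M t x. (M - mat t) *v x = M *v x - t *s (x::'a^'n)"
    by (simp add: matrix_vector_mult_diff_rdistrib mat_mv)
  have Au: "\<And>i. i < d \<Longrightarrow> A *v u i = th i *s u i + u (Suc i)"
    by (simp add: uS mvd)
  have Aud: "A *v u d = th d *s u d"
  proof -
    have "u d \<in> U d" using Uu[of d] by (simp add: vec.span_base)
    then have "(A - mat (th d)) *v u d \<in> {0}" using sAd by blast
    then show ?thesis by (simp add: mvd)
  qed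
  have Asu0: "As *v u 0 = ths 0 *s u 0"
  proof -
    have "u 0 \<in> U 0" using Uu[of 0] by (simp add: vec.span_base)
    then have "(As - mat (ths 0)) *v u 0 \<in> {0}" using sAs0 by blast
    then show ?thesis by (simp add: mvd)
  qed
  have Asu: "\<And>i. 1 \<le> i \<Longrightarrow> i \<le> d \<Longrightarrow> As *v u i - ths i *s u i \<in> vec.span {u (i - 1)}"
  proof -
    fix i assume i: "1 \<le> i" "i \<le> d"
    have "u i \<in> U i" using Uu[of i] i by (simp add: vec.span_base)
    then have "(As - mat (ths i)) *v u i \<in> U (i - 1)" using sAs i by blast
    then show "As *v u i - ths i *s u i \<in> vec.span {u (i - 1)}" using Uu[of "i - 1"] i by (simp add: mvd)
  qed
  have Asback: "\<And>i. 1 \<le> i \<Longrightarrow> i \<le> d \<Longrightarrow> u (i - 1) \<in> vec.span {As *v u i, u i}"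
  proof -
    fix i assume i: "1 \<le> i" "i \<le> d"
    have "u (i - 1) \<in> U (i - 1)" using Uu[of "i - 1"] i by (simp add: vec.span_base)
    also have "U (i - 1) = (\<lambda>v. (As - mat (ths i)) *v v) ` U i" using sAs i by simp
    also have "\<dots> = vec.span {(As - mat (ths i)) *v u i}" using Uu[of i] i by (simp add: mv_span_single)
    also have "\<dots> \<subseteq> vec.span {As *v u i, u i}"
    proof (rule vec.span_minimal)
      have "As *v u i - ths i *s u i \<in> vec.span {As *v u i, u i}"
        by (intro vec.span_diff vec.span_scale vec.span_base) auto
      then show "{(As - mat (ths i)) *v u i} \<subseteq> vec.span {As *v u i, u i}" by (simp add: mvd)
    qed simp
    finally show "u (i - 1) \<in> vec.span {As *v u i, u i}" .
  qed
  have spanU: "vec.span (u ` {..d}) = UNIV"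
    using spU span_Union_single[of "{..d}" U u] Uu by simp
  have indep': "\<And>c. (\<Sum>h\<le>d. c h *s u h) = 0 \<Longrightarrow> \<forall>h\<le>d. c h = 0"
  proof -
    fix c assume c: "(\<Sum>h\<le>d. c h *s u h) = 0"
    have "\<forall>h\<le>d. c h *s u h \<in> U h" using Uu by (auto intro: vec.span_scale vec.span_base)
    then have "\<forall>h\<le>d. c h *s u h = 0" using indep[rule_format, of "\<lambda>h. c h *s u h"] c by simp
    then show "\<forall>h\<le>d. c h = 0" using unz by simp
  qed
  have EsImg: "\<And>h v. h \<le> d \<Longrightarrow> Es h *v v \<in> vec.span (u ` {..<Suc h})"
    unfolding Es_def by (rule UE_img[OF Asu0 Asu spanU])
  have EsNear: "\<And>h. h \<le> d \<Longrightarrow> Es h *v u h - u h \<in> vec.span (u ` {..<h})"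
    unfolding Es_def by (rule UE_near[OF Asu0 Asu injAs])
  have EImg: "\<And>h v. h \<le> d \<Longrightarrow> E h *v v \<in> vec.span (u ` {h..d})"
    unfolding E_def by (rule LE_img[OF Au Aud spanU])
  have ENear: "\<And>h. h \<le> d \<Longrightarrow> E h *v u h - u h \<in> vec.span (u ` {Suc h..d})"
    unfolding E_def by (rule LE_near[OF Au Aud injA])
  have imgE: "\<And>M x. x \<in> img M \<longleftrightarrow> (\<exists>v. x = M *v v)" by (auto simp: img_def)
  have UL: "\<And>i. i \<le> d \<Longrightarrow> vec.span (\<Union>h\<le>i. U h) = vec.span (u ` {..i})"
  proof -
    fix i assume i: "i \<le> d"
    have "\<forall>h\<in>{..i}. U h = vec.span {u h}" using Uu i by auto
    then show "vec.span (\<Union>h\<le>i. U h) = vec.span (u ` {..i})" by (rule span_Union_single)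
  qed
  have UR: "\<And>i. i \<le> d \<Longrightarrow> vec.span (\<Union>h\<in>{i..d}. U h) = vec.span (u ` {i..d})"
  proof -
    fix i assume i: "i \<le> d"
    have "\<forall>h\<in>{i..d}. U h = vec.span {u h}" using Uu i by auto
    then show "vec.span (\<Union>h\<in>{i..d}. U h) = vec.span (u ` {i..d})" by (rule span_Union_single)
  qed
  have P2: "\<And>i. i \<le> d \<Longrightarrow> vec.span (\<Union>h\<le>i. img (Es h)) = vec.span (u ` {..i})"
  proof -
    fix i assume i: "i \<le> d"
    have cl: "k \<le> Suc d \<Longrightarrow> vec.span (u ` {..<k}) \<subseteq> vec.span (\<Union>h<k. img (Es h))" for k
    proof (induction k)
      case 0 then show ?case by (simp add: vec.span_zero)
    next
      case (Suc k)
      let ?T = "vec.span (\<Union>h<Suc k. img (Es h))"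
      have kd: "k \<le> d" using Suc.prems by simp
      have sub1: "vec.span (\<Union>h<k. img (Es h)) \<subseteq> ?T" by (intro vec.span_mono UN_mono) auto
      have ih: "vec.span (u ` {..<k}) \<subseteq> ?T" using Suc.IH Suc.prems sub1 by auto
      have t1: "Es k *v u k \<in> ?T" by (intro vec.span_base UN_I[of k]) (auto simp: img_def)
      have t2: "Es k *v u k - u k \<in> ?T" using EsNear[OF kd] ih by blast
      have "u k = Es k *v u k - (Es k *v u k - u k)" by simp
      then have t3: "u k \<in> ?T" using t1 t2 by (metis vec.span_diff)
      have t4: "u ` {..<k} \<subseteq> ?T" by (rule order_trans[OF vec.span_superset ih])
      have eq: "u ` {..<Suc k} = insert (u k) (u ` {..<k})" by (auto simp: lessThan_Suc)
      show ?case unfolding eq by (intro vec.span_minimal) (use t3 t4 in auto)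
    qed
    show "vec.span (\<Union>h\<le>i. img (Es h)) = vec.span (u ` {..i})"
    proof (rule antisym)
      show "vec.span (\<Union>h\<le>i. img (Es h)) \<subseteq> vec.span (u ` {..i})"
      proof (rule vec.span_minimal)
        show "(\<Union>h\<le>i. img (Es h)) \<subseteq> vec.span (u ` {..i})"
        proof
          fix x assume "x \<in> (\<Union>h\<le>i. img (Es h))"
          then obtain h v where h: "h \<le> i" "x = Es h *v v" by (auto simp: img_def)
          have "x \<in> vec.span (u ` {..<Suc h})" using h i EsImg by simp
          moreover have "vec.span (u ` {..<Suc h}) \<subseteq> vec.span (u ` {..i})"
            using h by (intro vec.span_mono) auto
          ultimately show "x \<in> vec.span (u ` {..i})" by blast
        qed
      qed simp
      show "vec.span (u ` {..i}) \<subseteq> vec.span (\<Union>h\<le>i. img (Es h))"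
        using cl[of "Suc i"] i by (simp add: lessThan_Suc_atMost)
    qed
  qed
  have P4: "\<And>i. i \<le> d \<Longrightarrow> vec.span (\<Union>h\<in>{i..d}. img (E h)) = vec.span (u ` {i..d})"
  proof -
    fix i assume i: "i \<le> d"
    have cl: "k \<le> Suc d \<Longrightarrow> vec.span (u ` {k..d}) \<subseteq> vec.span (\<Union>h\<in>{k..d}. img (E h))" for k
    proof (induction k rule: inc_induct)
      case base then show ?case by (simp add: vec.span_zero)
    next
      case (step n)
      let ?T = "vec.span (\<Union>h\<in>{n..d}. img (E h))"
      have nd: "n \<le> d" using step.hyps by simp
      have sub1: "vec.span (\<Union>h\<in>{Suc n..d}. img (E h)) \<subseteq> ?T" by (intro vec.span_mono UN_mono) auto
      have ih: "vec.span (u ` {Suc n..d}) \<subseteq> ?T" using step.IH sub1 by auto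
      have t1: "E n *v u n \<in> ?T" using nd by (intro vec.span_base UN_I[of n]) (auto simp: img_def)
      have t2: "E n *v u n - u n \<in> ?T" using ENear[OF nd] ih by blast
      have "u n = E n *v u n - (E n *v u n - u n)" by simp
      then have t3: "u n \<in> ?T" using t1 t2 by (metis vec.span_diff)
      have t4: "u ` {Suc n..d} \<subseteq> ?T" by (rule order_trans[OF vec.span_superset ih])
      have eq: "u ` {n..d} = insert (u n) (u ` {Suc n..d})"
        using atLeastAtMost_insertL[OF nd] by auto
      show ?case unfolding eq by (intro vec.span_minimal) (use t3 t4 in auto)
    qed
    show "vec.span (\<Union>h\<in>{i..d}. img (E h)) = vec.span (u ` {i..d})"
    proof (rule antisym)
      show "vec.span (\<Union>h\<in>{i..d}. img (E h)) \<subseteq> vec.span (u ` {i..d})"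
      proof (rule vec.span_minimal)
        show "(\<Union>h\<in>{i..d}. img (E h)) \<subseteq> vec.span (u ` {i..d})"
        proof
          fix x assume "x \<in> (\<Union>h\<in>{i..d}. img (E h))"
          then obtain h v where h: "h \<in> {i..d}" "x = E h *v v" by (auto simp: img_def)
          have "x \<in> vec.span (u ` {h..d})" using h EImg by simp
          moreover have "vec.span (u ` {h..d}) \<subseteq> vec.span (u ` {i..d})"
            using h by (intro vec.span_mono) auto
          ultimately show "x \<in> vec.span (u ` {i..d})" by blast
        qed
      qed simp
      show "vec.span (u ` {i..d}) \<subseteq> vec.span (\<Union>h\<in>{i..d}. img (E h))"
        using cl[of i] i by simp
    qed
  qed
  have P5: "\<And>i. i \<le> d \<Longrightarrow> U i = vec.span (u ` {..i}) \<inter> vec.span (u ` {i..d})"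
  proof -
    fix i assume i: "i \<le> d"
    show "U i = vec.span (u ` {..i}) \<inter> vec.span (u ` {i..d})"
    proof (rule antisym)
      have "vec.span {u i} \<subseteq> vec.span (u ` {..i})" by (rule vec.span_mono) auto
      moreover have "vec.span {u i} \<subseteq> vec.span (u ` {i..d})" using i by (intro vec.span_mono) auto
      ultimately show "U i \<subseteq> vec.span (u ` {..i}) \<inter> vec.span (u ` {i..d})" using Uu[OF i] by auto
      show "vec.span (u ` {..i}) \<inter> vec.span (u ` {i..d}) \<subseteq> U i"
      proof
        fix x assume x: "x \<in> vec.span (u ` {..i}) \<inter> vec.span (u ` {i..d})"
        obtain a where a: "x = (\<Sum>h\<in>{..i}. a h *s u h)" using span_repr[of "{..i}" x u] x by auto
        obtain b where b: "x = (\<Sum>h\<in>{i..d}. b h *s u h)" using span_repr[of "{i..d}" x u] x by auto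
        define c where "c h = (if h \<le> i then a h else 0) - (if i \<le> h then b h else 0)" for h
        have s1: "(\<Sum>h\<le>d. (if h \<le> i then a h else 0) *s u h) = (\<Sum>h\<in>{..i}. a h *s u h)"
        proof -
          have "(\<Sum>h\<le>d. (if h \<le> i then a h else 0) *s u h) = (\<Sum>h\<le>d. if h \<le> i then a h *s u h else 0)"
            by (intro sum.cong) auto
          also have "\<dots> = (\<Sum>h\<in>{h\<in>{..d}. h \<le> i}. a h *s u h)"
            by (rule sum.inter_filter[symmetric]) simp
          also have "{h\<in>{..d}. h \<le> i} = {..i}" using i by auto
          finally show ?thesis .
        qed
        have s2: "(\<Sum>h\<le>d. (if i \<le> h then b h else 0) *s u h) = (\<Sum>h\<in>{i..d}. b h *s u h)"
        proof -
          have "(\<Sum>h\<le>d. (if i \<le> h then b h else 0) *s u h) = (\<Sum>h\<le>d. if i \<le> h then b h *s u h else 0)"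
            by (intro sum.cong) auto
          also have "\<dots> = (\<Sum>h\<in>{h\<in>{..d}. i \<le> h}. b h *s u h)"
            by (rule sum.inter_filter[symmetric]) simp
          also have "{h\<in>{..d}. i \<le> h} = {i..d}" by auto
          finally show ?thesis .
        qed
        have "(\<Sum>h\<le>d. c h *s u h) = (\<Sum>h\<le>d. (if h \<le> i then a h else 0) *s u h)
            - (\<Sum>h\<le>d. (if i \<le> h then b h else 0) *s u h)"
          unfolding c_def vec.scale_left_diff_distrib sum_subtractf ..
        then have "(\<Sum>h\<le>d. c h *s u h) = 0" using s1 s2 a b by simp
        then have c0: "\<forall>h\<le>d. c h = 0" by (rule indep')
        have ah: "\<forall>h<i. a h = 0"
        proof (intro allI impI)
          fix h assume "h < i"
          then show "a h = 0" using c0[rule_format, of h] i by (simp add: c_def)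
        qed
        have "x = (\<Sum>h\<in>{..i}. if h = i then a i *s u i else 0)"
          unfolding a using ah by (intro sum.cong) auto
        also have "\<dots> = a i *s u i" by simp
        finally show "x \<in> U i" using Uu[OF i] by (simp add: vec.span_scale vec.span_base)
      qed
    qed
  qed
  have img0: "img (Es 0) = vec.span {u 0}"
  proof (rule antisym)
    have eu: "u ` {..<Suc 0} = {u 0}" by auto
    show "img (Es 0) \<subseteq> vec.span {u 0}" using EsImg[of 0] eu by (auto simp: img_def)
    have e: "Es 0 *v u 0 = u 0" using EsNear[of 0] by simp
    show "vec.span {u 0} \<subseteq> img (Es 0)"
    proof
      fix x assume "x \<in> vec.span {u 0}"
      then obtain k where "x = k *s u 0" by (auto simp: vec.span_singleton)
      then have "x = Es 0 *v (k *s u 0)" using e by (simp add: vector_scalar_commute)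
      then show "x \<in> img (Es 0)" by (auto simp: img_def)
    qed
  qed
  define p where "p h = mpow_app A h (u 0)" for h
  have Aspan: "\<And>i x. i < d \<Longrightarrow> x \<in> vec.span (u ` {..i}) \<Longrightarrow> A *v x \<in> vec.span (u ` {..Suc i})"
  proof -
    fix i x assume i: "i < d" and x: "x \<in> vec.span (u ` {..i})"
    show "A *v x \<in> vec.span (u ` {..Suc i})"
    proof (rule mv_span[OF _ x])
      fix y assume "y \<in> u ` {..i}"
      then obtain h where h: "h \<le> i" "y = u h" by auto
      have "A *v u h = th h *s u h + u (Suc h)" using h i Au by simp
      moreover have "u h \<in> vec.span (u ` {..Suc i})" using h by (intro vec.span_base) auto
      moreover have "u (Suc h) \<in> vec.span (u ` {..Suc i})" using h by (intro vec.span_base) auto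
      ultimately show "A *v y \<in> vec.span (u ` {..Suc i})"
        using h by (metis vec.span_add vec.span_scale)
    qed
  qed
  have Apspan: "\<And>i x. x \<in> vec.span (p ` {..i}) \<Longrightarrow> A *v x \<in> vec.span (p ` {..Suc i})"
  proof -
    fix i x assume x: "x \<in> vec.span (p ` {..i})"
    show "A *v x \<in> vec.span (p ` {..Suc i})"
    proof (rule mv_span[OF _ x])
      fix y assume "y \<in> p ` {..i}"
      then obtain h where h: "h \<le> i" "y = p h" by auto
      have "A *v y = p (Suc h)" using h by (simp add: p_def mpow_Suc)
      then show "A *v y \<in> vec.span (p ` {..Suc i})" using h by (auto intro: vec.span_base)
    qed
  qed
  have pu: "i \<le> d \<Longrightarrow> vec.span (p ` {..i}) = vec.span (u ` {..i})" for i
  proof (induction i)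
    case 0 then show ?case by (simp add: p_def mpow_app_def)
  next
    case (Suc i)
    then have id: "i < d" by simp
    with Suc.IH have IH: "vec.span (p ` {..i}) = vec.span (u ` {..i})" by simp
    have ep: "p ` {..Suc i} = insert (p (Suc i)) (p ` {..i})" by (auto simp: atMost_Suc)
    have eu: "u ` {..Suc i} = insert (u (Suc i)) (u ` {..i})" by (auto simp: atMost_Suc)
    have su: "vec.span (u ` {..i}) \<subseteq> vec.span (u ` {..Suc i})" by (intro vec.span_mono) auto
    have sp: "vec.span (p ` {..i}) \<subseteq> vec.span (p ` {..Suc i})" by (intro vec.span_mono) auto
    show ?case
    proof (rule antisym)
      show "vec.span (p ` {..Suc i}) \<subseteq> vec.span (u ` {..Suc i})"
      proof (rule vec.span_minimal)
        have "p (Suc i) = A *v p i" by (simp add: p_def mpow_Suc)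
        moreover have "p i \<in> vec.span (u ` {..i})" using IH by (metis atMost_iff imageI order_refl vec.span_base)
        ultimately have 1: "p (Suc i) \<in> vec.span (u ` {..Suc i})" using Aspan id by simp
        have 2: "p ` {..i} \<subseteq> vec.span (u ` {..Suc i})" using vec.span_superset[of "p ` {..i}"] IH su by auto
        show "p ` {..Suc i} \<subseteq> vec.span (u ` {..Suc i})" unfolding ep using 1 2 by auto
      qed simp
      show "vec.span (u ` {..Suc i}) \<subseteq> vec.span (p ` {..Suc i})"
      proof (rule vec.span_minimal)
        have ui: "u i \<in> vec.span (p ` {..i})" using IH by (metis atMost_iff imageI order_refl vec.span_base)
        have "u (Suc i) = A *v u i - th i *s u i" using Au id by simp
        moreover have "A *v u i \<in> vec.span (p ` {..Suc i})" using Apspan ui by blast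
        moreover have "u i \<in> vec.span (p ` {..Suc i})" using ui sp by blast
        ultimately have 1: "u (Suc i) \<in> vec.span (p ` {..Suc i})" by (metis vec.span_diff vec.span_scale)
        have 2: "u ` {..i} \<subseteq> vec.span (p ` {..Suc i})" using vec.span_superset[of "u ` {..i}"] IH sp by auto
        show "u ` {..Suc i} \<subseteq> vec.span (p ` {..Suc i})" unfolding eu using 1 2 by auto
      qed simp
    qed
  qed
  have P1: "\<And>i. i \<le> d \<Longrightarrow> vec.span (\<Union>h\<le>i. mpow_app A h ` img (Es 0)) = vec.span (u ` {..i})"
  proof -
    fix i assume i: "i \<le> d"
    have "(\<Union>h\<le>i. mpow_app A h ` img (Es 0)) = (\<Union>h\<le>i. vec.span {p h})"
      by (simp add: img0 mpow_span_single p_def)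
    moreover have "vec.span (\<Union>h\<le>i. vec.span {p h}) = vec.span (p ` {..i})"
      by (rule span_Union_single) simp
    ultimately show "vec.span (\<Union>h\<le>i. mpow_app A h ` img (Es 0)) = vec.span (u ` {..i})"
      using pu[OF i] by simp
  qed
  have imgd: "img (E d) = vec.span {u d}"
  proof (rule antisym)
    show "img (E d) \<subseteq> vec.span {u d}" using EImg[of d] by (auto simp: img_def)
    have e: "E d *v u d = u d" using ENear[of d] by simp
    show "vec.span {u d} \<subseteq> img (E d)"
    proof
      fix x assume "x \<in> vec.span {u d}"
      then obtain k where "x = k *s u d" by (auto simp: vec.span_singleton)
      then have "x = E d *v (k *s u d)" using e by (simp add: vector_scalar_commute)
      then show "x \<in> img (E d)" by (auto simp: img_def)
    qed
  qed
  define q where "q h = mpow_app As h (u d)" for h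
  have Asq: "\<And>m x. x \<in> vec.span (q ` {..m}) \<Longrightarrow> As *v x \<in> vec.span (q ` {..Suc m})"
  proof -
    fix m x assume x: "x \<in> vec.span (q ` {..m})"
    show "As *v x \<in> vec.span (q ` {..Suc m})"
    proof (rule mv_span[OF _ x])
      fix y assume "y \<in> q ` {..m}"
      then obtain h where h: "h \<le> m" "y = q h" by auto
      have "As *v y = q (Suc h)" using h by (simp add: q_def mpow_Suc)
      then show "As *v y \<in> vec.span (q ` {..Suc m})" using h by (auto intro: vec.span_base)
    qed
  qed
  have qu: "m \<le> d \<Longrightarrow> vec.span (q ` {..m}) = vec.span (u ` {d - m..d})" for m
  proof (induction m)
    case 0 then show ?case by (simp add: q_def mpow_app_def)
  next
    case (Suc m)
    define k where "k = d - Suc m"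
    have kd: "Suc k \<le> d" "d - m = Suc k" using Suc.prems by (simp_all add: k_def)
    have IH: "vec.span (q ` {..m}) = vec.span (u ` {Suc k..d})" using Suc kd by simp
    have eq: "q ` {..Suc m} = insert (q (Suc m)) (q ` {..m})" by (auto simp: atMost_Suc)
    have eu: "u ` {k..d} = insert (u k) (u ` {Suc k..d})"
      using atLeastAtMost_insertL[of k d] kd by auto
    have su: "vec.span (u ` {Suc k..d}) \<subseteq> vec.span (u ` {k..d})" by (intro vec.span_mono) auto
    have sq: "vec.span (q ` {..m}) \<subseteq> vec.span (q ` {..Suc m})" by (intro vec.span_mono) auto
    show ?case unfolding k_def[symmetric]
    proof (rule antisym)
      show "vec.span (q ` {..Suc m}) \<subseteq> vec.span (u ` {k..d})"
      proof (rule vec.span_minimal)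
        have "q m \<in> vec.span (u ` {Suc k..d})" using IH by (metis atMost_iff imageI order_refl vec.span_base)
        then have 1: "q (Suc m) \<in> vec.span (u ` {k..d})"
          by (simp add: q_def mpow_Suc U_down[OF Asu0 Asu])
        have 2: "q ` {..m} \<subseteq> vec.span (u ` {k..d})" using vec.span_superset[of "q ` {..m}"] IH su by auto
        show "q ` {..Suc m} \<subseteq> vec.span (u ` {k..d})" unfolding eq using 1 2 by auto
      qed simp
      show "vec.span (u ` {k..d}) \<subseteq> vec.span (q ` {..Suc m})"
      proof (rule vec.span_minimal)
        have "u (Suc k) \<in> vec.span (q ` {..m})" using IH kd
          by (metis atLeastAtMost_iff imageI order_refl vec.span_base)
        then have a1: "u (Suc k) \<in> vec.span (q ` {..Suc m})" and a2: "As *v u (Suc k) \<in> vec.span (q ` {..Suc m})"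
          using sq Asq by blast+
        have "vec.span {As *v u (Suc k), u (Suc k)} \<subseteq> vec.span (q ` {..Suc m})"
          using a1 a2 by (intro vec.span_minimal) auto
        moreover have "u k \<in> vec.span {As *v u (Suc k), u (Suc k)}" using Asback[of "Suc k"] kd by simp
        ultimately have 1: "u k \<in> vec.span (q ` {..Suc m})" by blast
        have 2: "u ` {Suc k..d} \<subseteq> vec.span (q ` {..Suc m})" using vec.span_superset[of "u ` {Suc k..d}"] IH sq by auto
        show "u ` {k..d} \<subseteq> vec.span (q ` {..Suc m})" unfolding eu using 1 2 by auto
      qed simp
    qed
  qed
  have P3: "\<And>i. i \<le> d \<Longrightarrow> vec.span (\<Union>h\<le>d - i. mpow_app As h ` img (E d)) = vec.span (u ` {i..d})"
  proof -
    fix i assume i: "i \<le> d"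
    have "(\<Union>h\<le>d - i. mpow_app As h ` img (E d)) = (\<Union>h\<le>d - i. vec.span {q h})"
      by (simp add: imgd mpow_span_single q_def)
    moreover have "vec.span (\<Union>h\<le>d - i. vec.span {q h}) = vec.span (q ` {..d - i})"
      by (rule span_Union_single) simp
    moreover have "d - (d - i) = i" using i by simp
    ultimately show "vec.span (\<Union>h\<le>d - i. mpow_app As h ` img (E d)) = vec.span (u ` {i..d})"
      using qu[of "d - i"] by simp
  qed
  show ?thesis
  proof (intro allI impI conjI)
    fix i assume i: "i \<le> d"
    show "vec.span (\<Union>h\<le>i. U h) = vec.span (\<Union>h\<le>i. mpow_app A h ` img (Es 0))"
      using UL[OF i] P1[OF i] by simp
    show "vec.span (\<Union>h\<le>i. U h) = vec.span (\<Union>h\<le>i. img (Es h))"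
      using UL[OF i] P2[OF i] by simp
    show "vec.span (\<Union>h\<in>{i..d}. U h) = vec.span (\<Union>h\<le>d - i. mpow_app As h ` img (E d))"
      using UR[OF i] P3[OF i] by simp
    show "vec.span (\<Union>h\<in>{i..d}. U h) = vec.span (\<Union>h\<in>{i..d}. img (E h))"
      using UR[OF i] P4[OF i] by simp
    show "U i = vec.span (\<Union>h\<le>i. img (Es h)) \<inter> vec.span (\<Union>h\<in>{i..d}. img (E h))"
      using P5[OF i] P2[OF i] P4[OF i] by simp
  qed
qed

end
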